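(* Let $f:\mathbb{R}^n\to\mathbb{R}$ be a continuously differentiable convex function and $s$ a positive integer. Let $h(x)=\sum_{i=1}^n h_i(x_i)$ be separable, with each $h_i:\mathbb{R}\to\mathbb{R}$ continuously differentiable and strictly convex, and suppose $f$ is $L_h$-smooth relative to $h$ (i.e. $L_h h-f$ is convex) for some $L_h>0$. If $x\in C_s$ is a CW-minimum point of $f$, then $$x\in\operatorname*{argmin}_{y\in C_s}\ \nabla f(x)^T(y-x)+L_h D_h(y,x),$$ i.e. $x$ is $L_h$-Bregman stationary with respect to $h$.
   Context: $C_s=\{x\in\mathbb{R}^n:\|x\|_0\le s\}$ where $\|x\|_0$ is the number of nonzero entries. $D_h(y,x)=h(y)-h(x)-\nabla h(x)^T(y-x)$. $I_1(x)=\{i:x_i\ne0\}$; $e_j$ is the $j$-th standard basis vector. A point $x\in C_s$ is a CW-minimum point of $f$ if either $\|x\|_0<s$ and $f(x)\le f(x+te_i)$ for all $t\in\mathbb{R}$ and all $i=1,\dots,n$; or $\|x\|_0=s$ and $f(x)\le f(x-x_ie_i+te_j)$ for all $t\in\mathbb{R}$, all $i\in I_1(x)$ and all $j=1,\dots,n$. *)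

theory Defs
  imports "HOL-Analysis.Analysis"
begin

definition strictly_convex_on :: "real set \<Rightarrow> (real \<Rightarrow> real) \<Rightarrow> bool" where
  "strictly_convex_on S g \<longleftrightarrow> convex S \<and> (\<forall>a\<in>S. \<forall>b\<in>S. \<forall>u::real. a \<noteq> b \<and> 0 < u \<and> u < 1 \<longrightarrow>
     g (u * a + (1 - u) * b) < u * g a + (1 - u) * g b)"

definition l0 :: "real^'n \<Rightarrow> nat" where
  "l0 x = card {i. x $ i \<noteq> 0}"

definition sparse_set :: "nat \<Rightarrow> (real^'n) set" where
  "sparse_set s = {x. l0 x \<le> s}"

definition supp1 :: "real^'n \<Rightarrow> 'n set" where
  "supp1 x = {i. x $ i \<noteq> 0}"

definition bregman :: "(real^'n \<Rightarrow> real) \<Rightarrow> (real^'n \<Rightarrow> real^'n) \<Rightarrow> real^'n \<Rightarrow> real^'n \<Rightarrow> real" where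
  "bregman h gh y x = h y - h x - gh x \<bullet> (y - x)"

definition CW_minimum :: "(real^'n \<Rightarrow> real) \<Rightarrow> nat \<Rightarrow> real^'n \<Rightarrow> bool" where
  "CW_minimum f s x \<longleftrightarrow> x \<in> sparse_set s \<and>
     ((l0 x < s \<and> (\<forall>t::real. \<forall>i. f x \<le> f (x + t *\<^sub>R axis i 1))) \<or>
      (l0 x = s \<and> (\<forall>t::real. \<forall>i\<in>supp1 x. \<forall>j. f x \<le> f (x - (x $ i) *\<^sub>R axis i 1 + t *\<^sub>R axis j 1))))"

end

theory Submission imports Defs begin

lemma convex_line:
  fixes G :: "real^'n \<Rightarrow> real"
  assumes "convex_on UNIV G"
  shows "convex_on UNIV (\<lambda>t::real. G (x + t *\<^sub>R d))"
proof -
  show ?thesis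
    unfolding convex_on_def
  proof (intro conjI allI impI ballI convex_UNIV)
    fix a b u v :: real assume uv: "0 \<le> u" "0 \<le> v" "u + v = 1"
    have "x + (u * a + v * b) *\<^sub>R d = u *\<^sub>R (x + a *\<^sub>R d) + v *\<^sub>R (x + b *\<^sub>R d)"
      using uv by (simp add: algebra_simps flip: scaleR_add_left)
    then show "G (x + (u *\<^sub>R a + v *\<^sub>R b) *\<^sub>R d) \<le> u * G (x + a *\<^sub>R d) + v * G (x + b *\<^sub>R d)"
      using assms uv unfolding convex_on_def by auto
  qed
qed

lemma descent:
  fixes f :: "real^'n \<Rightarrow> real" and gf :: "real^'n \<Rightarrow> real^'n"
    and hi :: "'n \<Rightarrow> real \<Rightarrow> real" and dhi :: "'n \<Rightarrow> real \<Rightarrow> real"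
  assumes f_deriv: "\<And>z. (f has_derivative (\<lambda>v. gf z \<bullet> v)) (at z)"
    and hi_deriv: "\<And>i t. (hi i has_real_derivative dhi i t) (at t)"
    and rel_smooth: "convex_on UNIV (\<lambda>z. L * (\<Sum>i\<in>UNIV. hi i (z $ i)) - f z)"
  shows "f y \<le> f x + gf x \<bullet> (y - x) + L * bregman (\<lambda>z. \<Sum>i\<in>UNIV. hi i (z $ i)) (\<lambda>z. \<chi> i. dhi i (z $ i)) y x"
proof -
  define d where "d = y - x"
  define g where "g = (\<lambda>t::real. L * (\<Sum>i\<in>UNIV. hi i ((x + t *\<^sub>R d) $ i)) - f (x + t *\<^sub>R d))"
  have cg: "convex_on UNIV g" unfolding g_def
    using convex_line[OF rel_smooth] by simp
  have h1: "((\<lambda>t. hi i ((x + t *\<^sub>R d) $ i)) has_real_derivative dhi i (x $ i) * d $ i) (at 0)" for i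
  proof -
    have "((\<lambda>t. x $ i + t * d $ i) has_real_derivative d $ i) (at 0)"
      by (auto intro!: derivative_eq_intros)
    from DERIV_chain2[OF hi_deriv this] show ?thesis by (simp add: mult.commute)
  qed
  have h2: "((\<lambda>t. f (x + t *\<^sub>R d)) has_real_derivative gf x \<bullet> d) (at 0)"
  proof -
    have l: "((\<lambda>t::real. x + t *\<^sub>R d) has_derivative (\<lambda>t. t *\<^sub>R d)) (at 0)"
      by (auto intro!: derivative_eq_intros)
    have "((\<lambda>t. f (x + t *\<^sub>R d)) has_derivative (\<lambda>t. gf x \<bullet> (t *\<^sub>R d))) (at 0)"
      using has_derivative_compose[OF l, of f "\<lambda>v. gf x \<bullet> v"] f_deriv[of x] by simp
    moreover have "(\<lambda>t. gf x \<bullet> (t *\<^sub>R d)) = (\<lambda>t. (gf x \<bullet> d) * t)" by auto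
    ultimately show ?thesis unfolding has_field_derivative_def
      by simp
  qed
  have dg: "(g has_real_derivative L * (\<Sum>i\<in>UNIV. dhi i (x $ i) * d $ i) - gf x \<bullet> d) (at 0)"
    unfolding g_def by (intro DERIV_diff DERIV_cmult DERIV_sum h1 h2)
  have "g 1 - g 0 \<ge> (L * (\<Sum>i\<in>UNIV. dhi i (x $ i) * d $ i) - gf x \<bullet> d) * (1 - 0)"
    by (rule convex_on_imp_above_tangent[OF cg]) (use dg in \<open>auto simp: has_field_derivative_at_within\<close>)
  then show ?thesis
    unfolding g_def bregman_def d_def by (simp add: inner_vec_def algebra_simps)
qed
theorem theorem4p12:
  fixes f :: "real^'n \<Rightarrow> real" and gf :: "real^'n \<Rightarrow> real^'n"
    and hi :: "'n \<Rightarrow> real \<Rightarrow> real" and dhi :: "'n \<Rightarrow> real \<Rightarrow> real"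
    and L :: real and s :: nat and x :: "real^'n"
  assumes f_deriv: "\<And>z. (f has_derivative (\<lambda>v. gf z \<bullet> v)) (at z)"
    and gf_cont: "continuous_on UNIV gf"
    and f_convex: "convex_on UNIV f"
    and s_pos: "0 < s"
    and hi_deriv: "\<And>i t. (hi i has_real_derivative dhi i t) (at t)"
    and dhi_cont: "\<And>i. continuous_on UNIV (dhi i)"
    and hi_strict: "\<And>i. strictly_convex_on UNIV (hi i)"
    and L_pos: "0 < L"
    and rel_smooth: "convex_on UNIV (\<lambda>z. L * (\<Sum>i\<in>UNIV. hi i (z $ i)) - f z)"
    and cw: "CW_minimum f s x"
  shows "x \<in> sparse_set s \<and>
    (\<forall>y\<in>sparse_set s.
       gf x \<bullet> (x - x) + L * bregman (\<lambda>z. \<Sum>i\<in>UNIV. hi i (z $ i)) (\<lambda>z. \<chi> i. dhi i (z $ i)) x x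
       \<le> gf x \<bullet> (y - x) + L * bregman (\<lambda>z. \<Sum>i\<in>UNIV. hi i (z $ i)) (\<lambda>z. \<chi> i. dhi i (z $ i)) y x)"
proof -
  define H where "H = (\<lambda>z::real^'n. \<Sum>i\<in>UNIV. hi i (z $ i))"
  define gH where "gH = (\<lambda>z::real^'n. \<chi> i. dhi i (z $ i))"
  define \<phi> where "\<phi> = (\<lambda>k t. gf x $ k * (t - x $ k) + L * (hi k t - hi k (x $ k) - dhi k (x $ k) * (t - x $ k)))"
  have phix: "\<phi> k (x $ k) = 0" for k unfolding \<phi>_def by simp
  have ident: "gf x \<bullet> (z - x) + L * bregman H gH z x = (\<Sum>k\<in>UNIV. \<phi> k (z $ k))" for z
    unfolding \<phi>_def bregman_def H_def gH_def inner_vec_def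
    by (simp add: algebra_simps sum_subtractf sum.distrib sum_distrib_left)
  have key: "f x \<le> f z \<Longrightarrow> 0 \<le> (\<Sum>k\<in>UNIV. \<phi> k (z $ k))" for z
    using descent[OF f_deriv hi_deriv rel_smooth, of z x] ident[of z]
    unfolding H_def gH_def by linarith
  have loc: "(\<Sum>k\<in>UNIV. \<phi> k (z $ k)) = (\<Sum>k\<in>S. \<phi> k (z $ k))" if "\<And>k. k \<notin> S \<Longrightarrow> z $ k = x $ k" for z S
    using sum.mono_neutral_left[of UNIV S "\<lambda>k. \<phi> k (z $ k)"] by (auto simp: that phix)
  have xs: "x \<in> sparse_set s" using cw unfolding CW_minimum_def by auto
  have main: "0 \<le> (\<Sum>k\<in>UNIV. \<phi> k (y $ k))" if y: "y \<in> sparse_set s" for y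
  proof -
    from cw consider (lt) "\<forall>t::real. \<forall>i. f x \<le> f (x + t *\<^sub>R axis i 1)"
      | (eq) "l0 x = s" "\<forall>t::real. \<forall>i\<in>supp1 x. \<forall>j. f x \<le> f (x - (x $ i) *\<^sub>R axis i 1 + t *\<^sub>R axis j 1)"
      unfolding CW_minimum_def by blast
    then show ?thesis
    proof cases
      case lt
      have "0 \<le> \<phi> j t" for j t
      proof -
        let ?z = "x + (t - x $ j) *\<^sub>R axis j 1"
        have "0 \<le> (\<Sum>k\<in>UNIV. \<phi> k (?z $ k))" using key lt by blast
        also have "\<dots> = (\<Sum>k\<in>{j}. \<phi> k (?z $ k))" by (rule loc) (simp add: axis_def)
        finally show ?thesis by (simp add: axis_def)
      qed
      then show ?thesis by (simp add: sum_nonneg)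
    next
      case eq
      define A where "A = supp1 x"
      define B where "B = supp1 y"
      have phiA: "0 \<le> \<phi> i t" if "i \<in> A" for i t
      proof -
        let ?z = "x - (x $ i) *\<^sub>R axis i 1 + t *\<^sub>R axis i 1"
        have "0 \<le> (\<Sum>k\<in>UNIV. \<phi> k (?z $ k))" using key eq that unfolding A_def by blast
        also have "\<dots> = (\<Sum>k\<in>{i}. \<phi> k (?z $ k))" by (rule loc) (simp add: axis_def)
        finally show ?thesis by (simp add: axis_def)
      qed
      have phiAB: "0 \<le> \<phi> i 0 + \<phi> j t" if "i \<in> A" "j \<notin> A" for i j t
      proof -
        let ?z = "x - (x $ i) *\<^sub>R axis i 1 + t *\<^sub>R axis j 1"
        have xj: "x $ j = 0" using that unfolding A_def supp1_def by auto
        have ij: "i \<noteq> j" using that by auto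
        have "0 \<le> (\<Sum>k\<in>UNIV. \<phi> k (?z $ k))" using key eq that unfolding A_def by blast
        also have "\<dots> = (\<Sum>k\<in>{i,j}. \<phi> k (?z $ k))" by (rule loc) (simp add: axis_def)
        finally show ?thesis using ij xj by (simp add: axis_def)
      qed
      have cA: "card A = s" using eq unfolding A_def supp1_def l0_def by simp
      have cB: "card B \<le> s" using y unfolding B_def supp1_def l0_def sparse_set_def by simp
      have "card (B - A) \<le> card (A - B)"
        using cA cB card_Int_Diff[of A B] card_Int_Diff[of B A]
        by (simp add: Int_commute)
      then obtain p where p: "p ` (B - A) \<subseteq> A - B" "inj_on p (B - A)"
        using card_le_inj[of "B - A" "A - B"] by auto
      define P where "P = p ` (B - A)"
      define C where "C = - (A \<union> B)"
      have U: "UNIV = A \<union> (B - A) \<union> C" unfolding C_def by auto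
      have PA: "P \<subseteq> A" using p unfolding P_def by auto
      have "(\<Sum>k\<in>UNIV. \<phi> k (y $ k)) = (\<Sum>k\<in>A. \<phi> k (y $ k))
          + (\<Sum>k\<in>B - A. \<phi> k (y $ k)) + (\<Sum>k\<in>C. \<phi> k (y $ k))"
      proof -
        have "(\<Sum>k\<in>A \<union> (B - A) \<union> C. \<phi> k (y $ k)) = (\<Sum>k\<in>A \<union> (B - A). \<phi> k (y $ k)) + (\<Sum>k\<in>C. \<phi> k (y $ k))"
          by (rule sum.union_disjoint) (auto simp: C_def)
        moreover have "(\<Sum>k\<in>A \<union> (B - A). \<phi> k (y $ k)) = (\<Sum>k\<in>A. \<phi> k (y $ k)) + (\<Sum>k\<in>B - A. \<phi> k (y $ k))"
          by (rule sum.union_disjoint) auto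
        ultimately show ?thesis using U by metis
      qed
      also have "(\<Sum>k\<in>A. \<phi> k (y $ k)) = (\<Sum>k\<in>A - P. \<phi> k (y $ k)) + (\<Sum>k\<in>P. \<phi> k (y $ k))"
        using sum.subset_diff[OF PA] by simp
      also have "(\<Sum>k\<in>C. \<phi> k (y $ k)) = 0"
        by (rule sum.neutral) (auto simp: C_def A_def B_def supp1_def phix[simplified] \<phi>_def)
      also have "(\<Sum>k\<in>P. \<phi> k (y $ k)) = (\<Sum>k\<in>B - A. \<phi> (p k) 0)"
        unfolding P_def using p by (subst sum.reindex) (auto simp: B_def supp1_def intro!: sum.cong)
      finally have "(\<Sum>k\<in>UNIV. \<phi> k (y $ k)) = (\<Sum>k\<in>A - P. \<phi> k (y $ k)) + (\<Sum>k\<in>B - A. \<phi> (p k) 0 + \<phi> k (y $ k))"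
        by (simp add: sum.distrib)
      also have "\<dots> \<ge> 0"
      proof -
        have "0 \<le> (\<Sum>k\<in>A - P. \<phi> k (y $ k))" using phiA by (intro sum_nonneg) auto
        moreover have "0 \<le> (\<Sum>k\<in>B - A. \<phi> (p k) 0 + \<phi> k (y $ k))"
          using p phiAB by (intro sum_nonneg) auto
        ultimately show ?thesis by simp
      qed
      finally show ?thesis by simp
    qed
  qed
  show ?thesis
    using xs main ident unfolding H_def gH_def bregman_def by simp
qed
end
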